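(* Let $\mathcal{C}$ and $\mathcal{E}$ be finite sets and $T_1,\dots,T_\ell$ be $|\mathcal{C}|\times|\mathcal{E}|$ matrices. Let $\{A_0=I,A_1,\dots,A_d\}$ be the basis of $\{0,1\}$-matrices of a commutative association scheme on $\mathcal{E}$, with primitive idempotents $E_0,\dots,E_d$ and eigenvalues $p_k(r)$ defined by $A_kE_r=p_k(r)E_r$, and suppose $T_i^\top T_j=\sum_{k=0}^d t_{ij}^kA_k$ for complex numbers $t_{ij}^k$ ($i,j\in[\ell]$). For $j\in[m]$ let $F_j=\sum_{i=1}^\ell f_{ij}T_i$ with $f_{ij}\in\mathbb{C}$, fix $s\in\{0,\dots,d\}$ and let $g:[m]\to[\ell]$. Then the following are equivalent: (i) for every $j\in[m]$ there is a non-zero constant $\alpha_j$ with $T_{g(j)}^\top F_j=\alpha_jE_s$, and $T_h^\top F_j=0$ for all $h<g(j)$; (ii) for every $j\in[m]$: $\sum_{i=1}^\ell f_{ij}t^k_{hi}=0$ for all $k\in\{0,\dots,d\}$ and all $h<g(j)$, and $\sum_{i=1}^\ell\sum_{k=0}^d f_{ij}t^k_{g(j),i}p_k(r)$ is non-zero for $r=s$ and zero for all $r\neq s$.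
   Context: $[m]=\{1,\dots,m\}$. Condition (i) is called the triangular criterion for $g$. *)

theory Defs
  imports "HOL-Analysis.Analysis"
begin

text \<open>Matrices indexed by finite types: a |C| x |E| matrix is an element of
  complex^'e^'c (rows indexed by 'c, columns by 'e).\<close>

definition msc :: "complex \<Rightarrow> complex^'n^'m \<Rightarrow> complex^'n^'m" where
  "msc c M = (\<chi> i j. c * M $ i $ j)"

definition comm_assoc_scheme :: "nat \<Rightarrow> (nat \<Rightarrow> complex^'e^'e) \<Rightarrow> bool" where
  "comm_assoc_scheme d A \<longleftrightarrow>
     A 0 = mat 1 \<and>
     (\<forall>k\<le>d. \<forall>x y. A k $ x $ y = 0 \<or> A k $ x $ y = 1) \<and>
     (\<forall>k\<le>d. A k \<noteq> 0) \<and>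
     (\<forall>x y. (\<Sum>k\<le>d. A k $ x $ y) = 1) \<and>
     (\<forall>k\<le>d. \<exists>k'\<le>d. transpose (A k) = A k') \<and>
     (\<forall>i\<le>d. \<forall>j\<le>d. \<exists>c. A i ** A j = (\<Sum>k\<le>d. msc (c k) (A k))) \<and>
     (\<forall>i\<le>d. \<forall>j\<le>d. A i ** A j = A j ** A i)"

definition bm_algebra :: "nat \<Rightarrow> (nat \<Rightarrow> complex^'e^'e) \<Rightarrow> (complex^'e^'e) set" where
  "bm_algebra d A = {M. \<exists>c. M = (\<Sum>k\<le>d. msc (c k) (A k))}"

definition idempotent_in :: "nat \<Rightarrow> (nat \<Rightarrow> complex^'e^'e) \<Rightarrow> complex^'e^'e \<Rightarrow> bool" where
  "idempotent_in d A M \<longleftrightarrow> M \<in> bm_algebra d A \<and> M ** M = M"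

definition primitive_idempotent :: "nat \<Rightarrow> (nat \<Rightarrow> complex^'e^'e) \<Rightarrow> complex^'e^'e \<Rightarrow> bool" where
  "primitive_idempotent d A M \<longleftrightarrow>
     idempotent_in d A M \<and> M \<noteq> 0 \<and>
     \<not> (\<exists>P Q. idempotent_in d A P \<and> idempotent_in d A Q \<and> P \<noteq> 0 \<and> Q \<noteq> 0 \<and>
             P ** Q = 0 \<and> M = P + Q)"

definition primitive_idempotents :: "nat \<Rightarrow> (nat \<Rightarrow> complex^'e^'e) \<Rightarrow> (nat \<Rightarrow> complex^'e^'e) \<Rightarrow> bool" where
  "primitive_idempotents d A E \<longleftrightarrow>
     (\<forall>r\<le>d. primitive_idempotent d A (E r)) \<and>
     inj_on E {..d} \<and>
     (\<forall>M. primitive_idempotent d A M \<longrightarrow> (\<exists>r\<le>d. M = E r))"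

end

theory Submission
  imports Defs
begin

lemma msc_comp[simp]: "msc c M $ i $ j = c * M $ i $ j"
  by (simp add: msc_def)

lemma sum_mat_comp: "(\<Sum>k\<in>S. X k) $ i $ j = (\<Sum>k\<in>S. X k $ i $ j)"
  by simp

lemma mult_comp: "(X ** Y) $ i $ j = (\<Sum>k\<in>UNIV. X $ i $ k * Y $ k $ j)"
  by (simp add: matrix_matrix_mult_def)

lemma msc_mult_left: "msc c X ** Y = msc c (X ** Y)"
  by (simp add: vec_eq_iff mult_comp sum_distrib_left mult.assoc)

lemma msc_mult_right: "X ** msc (c::complex) Y = msc c (X ** Y)"
  by (simp add: vec_eq_iff mult_comp sum_distrib_left mult_ac)

lemma sum_mult_left: "(\<Sum>k\<in>S. X k) ** (Y::complex^_^_) = (\<Sum>k\<in>S. X k ** Y)"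
  unfolding vec_eq_iff mult_comp sum_component sum_distrib_right
  by (auto intro: sum.swap)

lemma sum_mult_right: "(Y::complex^_^_) ** (\<Sum>k\<in>S. X k) = (\<Sum>k\<in>S. Y ** X k)"
  unfolding vec_eq_iff mult_comp sum_component sum_distrib_left
  by (auto intro: sum.swap)

lemma add_mult_left: "(X + Y) ** (Z::complex^_^_) = X ** Z + Y ** Z"
  by (simp add: vec_eq_iff mult_comp distrib_right sum.distrib)
lemma add_mult_right: "(Z::complex^_^_) ** (X + Y) = Z ** X + Z ** Y"
  by (simp add: vec_eq_iff mult_comp distrib_left sum.distrib)
lemma diff_mult_left: "(X - Y) ** (Z::complex^_^_) = X ** Z - Y ** Z"
  by (simp add: vec_eq_iff mult_comp left_diff_distrib sum_subtractf)
lemma diff_mult_right: "(Z::complex^_^_) ** (X - Y) = Z ** X - Z ** Y"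
  by (simp add: vec_eq_iff mult_comp right_diff_distrib sum_subtractf)
lemma zero_mult_left[simp]: "0 ** (Z::complex^_^_) = 0"
  by (simp add: vec_eq_iff mult_comp)
lemma zero_mult_right[simp]: "(Z::complex^_^_) ** 0 = 0"
  by (simp add: vec_eq_iff mult_comp)

lemma msc_sum_msc: "msc a (msc b X) = msc (a*b) X"
  by (simp add: vec_eq_iff mult.assoc)

lemma msc_sum: "msc c (\<Sum>k\<in>S. X k) = (\<Sum>k\<in>S. msc c (X k))"
  by (simp add: vec_eq_iff sum_distrib_left)

lemma prod_expand: "(\<Sum>i\<in>S. msc (a i) (P i)) ** (\<Sum>j\<in>S'. msc (b j) (Q j :: complex^_^_))
   = (\<Sum>j\<in>S'. \<Sum>i\<in>S. msc (b j * a i) (P i ** Q j))"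
  by (simp add: sum_mult_left sum_mult_right msc_mult_left msc_mult_right msc_sum msc_sum_msc)

lemma msc_eq_cancel: "msc a X = msc b X \<Longrightarrow> X \<noteq> 0 \<Longrightarrow> a = (b::complex)"
  by (auto simp: vec_eq_iff)

lemma msc_zero_iff: "msc a X = 0 \<Longrightarrow> X \<noteq> 0 \<Longrightarrow> a = (0::complex)"
  by (auto simp: vec_eq_iff)

context
  fixes d :: nat and A :: "nat \<Rightarrow> complex^'e::finite^'e"
  assumes scheme: "comm_assoc_scheme d A"
begin

lemma sch_A0: "A 0 = mat 1"
  using scheme[unfolded comm_assoc_scheme_def] by (elim conjE) assumption
lemma sch_01: "\<forall>k\<le>d. \<forall>x y. A k $ x $ y = 0 \<or> A k $ x $ y = 1"
  using scheme[unfolded comm_assoc_scheme_def] by (elim conjE) assumption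
lemma sch_nz: "\<forall>k\<le>d. A k \<noteq> 0"
  using scheme[unfolded comm_assoc_scheme_def] by (elim conjE) assumption
lemma sch_sum: "\<forall>x y. (\<Sum>k\<le>d. A k $ x $ y) = 1"
  using scheme[unfolded comm_assoc_scheme_def] by (elim conjE) assumption
lemma sch_mult: "\<forall>i\<le>d. \<forall>j\<le>d. \<exists>c. A i ** A j = (\<Sum>k\<le>d. msc (c k) (A k))"
  using scheme[unfolded comm_assoc_scheme_def] by (elim conjE) assumption
lemma sch_comm: "\<forall>i\<le>d. \<forall>j\<le>d. A i ** A j = A j ** A i"
  using scheme[unfolded comm_assoc_scheme_def] by (elim conjE) assumption

lemma bm_add: "X \<in> bm_algebra d A \<Longrightarrow> Y \<in> bm_algebra d A \<Longrightarrow> X + Y \<in> bm_algebra d A"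
proof -
  assume "X \<in> bm_algebra d A" "Y \<in> bm_algebra d A"
  then obtain a b where "X = (\<Sum>k\<le>d. msc (a k) (A k))" "Y = (\<Sum>k\<le>d. msc (b k) (A k))"
    by (auto simp: bm_algebra_def)
  then have "X + Y = (\<Sum>k\<le>d. msc (a k + b k) (A k))"
    by (simp add: vec_eq_iff distrib_right sum.distrib)
  then show ?thesis by (auto simp: bm_algebra_def)
qed

lemma bm_scale: "X \<in> bm_algebra d A \<Longrightarrow> msc c X \<in> bm_algebra d A"
proof -
  assume "X \<in> bm_algebra d A"
  then obtain a where "X = (\<Sum>k\<le>d. msc (a k) (A k))"
    by (auto simp: bm_algebra_def)
  then have "msc c X = (\<Sum>k\<le>d. msc (c * a k) (A k))"
    by (simp add: vec_eq_iff sum_distrib_left mult.assoc)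
  then show ?thesis by (auto simp: bm_algebra_def)
qed

lemma bm_zero: "0 \<in> bm_algebra d A"
proof -
  have "(0::complex^'e^'e) = (\<Sum>k\<le>d. msc 0 (A k))" by (simp add: vec_eq_iff)
  then show ?thesis unfolding bm_algebra_def mem_Collect_eq by (rule exI[of _ "\<lambda>_. 0"])
qed

lemma bm_diff: "X \<in> bm_algebra d A \<Longrightarrow> Y \<in> bm_algebra d A \<Longrightarrow> X - Y \<in> bm_algebra d A"
proof -
  assume "X \<in> bm_algebra d A" "Y \<in> bm_algebra d A"
  moreover have "X - Y = X + msc (-1) Y" by (simp add: vec_eq_iff)
  ultimately show ?thesis by (metis bm_add bm_scale)
qed

lemma bm_sum: "finite S \<Longrightarrow> (\<And>i. i \<in> S \<Longrightarrow> X i \<in> bm_algebra d A) \<Longrightarrow> (\<Sum>i\<in>S. X i) \<in> bm_algebra d A"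
  by (induction S rule: finite_induct) (auto simp: bm_zero bm_add)

lemma bm_A: "k \<le> d \<Longrightarrow> A k \<in> bm_algebra d A"
proof -
  assume k: "k \<le> d"
  have "A k = (\<Sum>j\<le>d. msc (if j = k then 1 else 0) (A j))"
    using k by (simp add: vec_eq_iff if_distrib if_distribR sum.delta cong: if_cong)
  then show ?thesis unfolding bm_algebra_def mem_Collect_eq by (rule exI[of _ "\<lambda>j. if j = k then 1 else 0"])
qed

lemma bm_one: "mat 1 \<in> bm_algebra d A"
  using bm_A[of 0] sch_A0 by simp

lemma bm_mult: "X \<in> bm_algebra d A \<Longrightarrow> Y \<in> bm_algebra d A \<Longrightarrow> X ** Y \<in> bm_algebra d A"
proof -
  assume "X \<in> bm_algebra d A" "Y \<in> bm_algebra d A"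
  then obtain a b where X: "X = (\<Sum>k\<le>d. msc (a k) (A k))" and Y: "Y = (\<Sum>k\<le>d. msc (b k) (A k))"
    by (auto simp: bm_algebra_def)
  have "X ** Y = (\<Sum>j\<le>d. \<Sum>i\<le>d. msc (b j * a i) (A i ** A j))"
    unfolding X Y by (rule prod_expand)
  moreover have "A i ** A j \<in> bm_algebra d A" if "i \<le> d" "j \<le> d" for i j
    using sch_mult that unfolding bm_algebra_def by blast
  ultimately show ?thesis by (auto intro!: bm_sum bm_scale)
qed

lemma bm_comm: "X \<in> bm_algebra d A \<Longrightarrow> Y \<in> bm_algebra d A \<Longrightarrow> X ** Y = Y ** X"
proof -
  assume "X \<in> bm_algebra d A" "Y \<in> bm_algebra d A"
  then obtain a b where X: "X = (\<Sum>k\<le>d. msc (a k) (A k))" and Y: "Y = (\<Sum>k\<le>d. msc (b k) (A k))"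
    by (auto simp: bm_algebra_def)
  have c: "A i ** A j = A j ** A i" if "i \<le> d" "j \<le> d" for i j
    using sch_comm that by blast
  have "X ** Y = (\<Sum>j\<le>d. \<Sum>i\<le>d. msc (b j * a i) (A i ** A j))"
    unfolding X Y by (rule prod_expand)
  also have "\<dots> = (\<Sum>i\<le>d. \<Sum>j\<le>d. msc (a i * b j) (A j ** A i))"
    apply (subst sum.swap)
    apply (intro sum.cong refl)
    subgoal for i j using c[of j i] by (simp add: mult.commute)
    done
  also have "\<dots> = Y ** X"
    unfolding X Y by (rule prod_expand[symmetric])
  finally show ?thesis .
qed

lemma A_indep: "(\<Sum>k\<le>d. msc (c k) (A k)) = 0 \<Longrightarrow> k \<le> d \<Longrightarrow> c k = 0"
proof -
  assume z: "(\<Sum>k\<le>d. msc (c k) (A k)) = 0" and k: "k \<le> d"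
  have s01: "\<forall>k\<le>d. \<forall>x y. A k $ x $ y = 0 \<or> A k $ x $ y = 1"
    and nz: "A k \<noteq> 0" and s1: "\<forall>x y. (\<Sum>k\<le>d. A k $ x $ y) = 1"
    using k sch_01 sch_nz sch_sum by auto
  from nz obtain x y where "A k $ x $ y \<noteq> 0" by (auto simp: vec_eq_iff)
  with s01 k have one: "A k $ x $ y = 1" by blast
  have "(\<Sum>j\<le>d. A j $ x $ y) = A k $ x $ y + (\<Sum>j\<in>{..d}-{k}. A j $ x $ y)"
    using k by (intro sum.remove) auto
  with s1 one have rest: "(\<Sum>j\<in>{..d}-{k}. A j $ x $ y) = 0" by simp
  have "(\<Sum>j\<in>{..d}-{k}. Re (A j $ x $ y)) = 0"
    using arg_cong[OF rest, of Re] by simp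
  moreover have "\<forall>j\<in>{..d}-{k}. 0 \<le> Re (A j $ x $ y)"
  proof
    fix j assume "j \<in> {..d}-{k}"
    then have "A j $ x $ y = 0 \<or> A j $ x $ y = 1" using s01 by auto
    then show "0 \<le> Re (A j $ x $ y)" by auto
  qed
  ultimately have "\<forall>j\<in>{..d}-{k}. Re (A j $ x $ y) = 0"
    using sum_nonneg_eq_0_iff[of "{..d}-{k}" "\<lambda>j. Re (A j $ x $ y)"] by simp
  have oth: "\<forall>j\<in>{..d}-{k}. A j $ x $ y = 0"
  proof
    fix j assume j: "j \<in> {..d}-{k}"
    then have "A j $ x $ y = 0 \<or> A j $ x $ y = 1" using s01 by auto
    moreover have "Re (A j $ x $ y) = 0" using \<open>\<forall>j\<in>{..d}-{k}. Re (A j $ x $ y) = 0\<close> j by blast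
    ultimately show "A j $ x $ y = 0" by auto
  qed
  have z0: "(\<Sum>j\<in>{..d}-{k}. c j * A j $ x $ y) = 0"
    using oth by (intro sum.neutral) auto
  have "0 = (\<Sum>j\<le>d. msc (c j) (A j)) $ x $ y" using z by simp
  also have "\<dots> = (\<Sum>j\<le>d. c j * A j $ x $ y)" by simp
  also have "\<dots> = c k * A k $ x $ y + (\<Sum>j\<in>{..d}-{k}. c j * A j $ x $ y)"
    using k by (intro sum.remove) auto
  also have "\<dots> = c k" using one z0 by simp
  finally show ?thesis by (rule sym)
qed

lemma idem_in_bm: "idempotent_in d A X \<Longrightarrow> X \<in> bm_algebra d A"
  by (simp add: idempotent_in_def)

lemma prim_bm: "primitive_idempotent d A X \<Longrightarrow> X \<in> bm_algebra d A"
  by (simp add: primitive_idempotent_def idempotent_in_def)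

lemma prim_idem: "primitive_idempotent d A X \<Longrightarrow> X ** X = X"
  by (simp add: primitive_idempotent_def idempotent_in_def)

lemma prim_nz: "primitive_idempotent d A X \<Longrightarrow> X \<noteq> 0"
  by (simp add: primitive_idempotent_def)

lemma prim_mult:
  assumes P: "primitive_idempotent d A P" and X: "idempotent_in d A X"
  shows "P ** X = 0 \<or> P ** X = P"
proof -
  have PB: "P \<in> bm_algebra d A" and PP: "P ** P = P" using P by (simp_all add: prim_bm prim_idem)
  have XB: "X \<in> bm_algebra d A" and XX: "X ** X = X" using X by (simp_all add: idempotent_in_def)
  define Y where "Y = P ** X"
  define Z where "Z = P - Y"
  have YB: "Y \<in> bm_algebra d A" unfolding Y_def using PB XB by (rule bm_mult)
  have ZB: "Z \<in> bm_algebra d A" unfolding Z_def using PB YB by (rule bm_diff)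
  have PY: "P ** Y = Y" unfolding Y_def by (simp add: matrix_mul_assoc PP)
  have YP: "Y ** P = Y" using bm_comm[OF YB PB] PY by simp
  have YY: "Y ** Y = Y"
  proof -
    have "Y ** Y = (Y ** P) ** X" unfolding Y_def by (simp add: matrix_mul_assoc)
    also have "\<dots> = Y" using YP by (simp add: Y_def matrix_mul_assoc[symmetric] XX)
    finally show ?thesis .
  qed
  have ZZ: "Z ** Z = Z"
    unfolding Z_def by (simp add: diff_mult_left diff_mult_right PP PY YP YY)
  have YZ: "Y ** Z = 0"
    unfolding Z_def by (simp add: diff_mult_right YP YY)
  have PYZ: "P = Y + Z" unfolding Z_def by simp
  have "\<not> (Y \<noteq> 0 \<and> Z \<noteq> 0)"
  proof
    assume "Y \<noteq> 0 \<and> Z \<noteq> 0"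
    then have "\<exists>P Q. idempotent_in d A P \<and> idempotent_in d A Q \<and> P \<noteq> 0 \<and> Q \<noteq> 0 \<and>
             P ** Q = 0 \<and> P + Z = P + Q"
      using YB ZB YY ZZ YZ by (auto simp: idempotent_in_def)
    then show False using P PYZ YB ZB YY ZZ YZ \<open>Y \<noteq> 0 \<and> Z \<noteq> 0\<close>
      unfolding primitive_idempotent_def idempotent_in_def by blast
  qed
  then show ?thesis unfolding Z_def Y_def by auto
qed

lemma descent:
  "idempotent_in d A Q \<Longrightarrow> Q \<noteq> 0 \<Longrightarrow> \<exists>P. primitive_idempotent d A P \<and> P ** Q = P"
proof (induction "dim (range (\<lambda>x. Q *v x))" arbitrary: Q rule: less_induct)
  case less
  show ?case
  proof (cases "primitive_idempotent d A Q")
    case True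
    then show ?thesis using prim_idem by blast
  next
    case False
    then obtain P1 P2 where P1: "idempotent_in d A P1" and P2: "idempotent_in d A P2"
      and nz1: "P1 \<noteq> 0" and nz2: "P2 \<noteq> 0" and o: "P1 ** P2 = 0" and QP: "Q = P1 + P2"
      using less.prems unfolding primitive_idempotent_def by blast
    have B1: "P1 \<in> bm_algebra d A" and PP1: "P1 ** P1 = P1" using P1 by (simp_all add: idempotent_in_def)
    have BQ: "Q \<in> bm_algebra d A" using less.prems by (simp add: idempotent_in_def)
    have P1Q: "P1 ** Q = P1" unfolding QP by (simp add: add_mult_right PP1 o)
    have QP1: "Q ** P1 = P1" using bm_comm[OF B1 BQ] P1Q by simp
    have sub: "range (\<lambda>x. P1 *v x) \<subseteq> range (\<lambda>x. Q *v x)"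
    proof
      fix v assume "v \<in> range (\<lambda>x. P1 *v x)"
      then obtain x where "v = P1 *v x" by blast
      then have "v = Q *v (P1 *v x)" by (simp add: matrix_vector_mul_assoc QP1)
      then show "v \<in> range (\<lambda>x. Q *v x)" by blast
    qed
    have neq: "range (\<lambda>x. P1 *v x) \<noteq> range (\<lambda>x. Q *v x)"
    proof
      assume eq: "range (\<lambda>x. P1 *v x) = range (\<lambda>x. Q *v x)"
      have "\<forall>x. (P1 ** Q) *v x = Q *v x"
      proof
        fix x
        have "Q *v x \<in> range (\<lambda>x. P1 *v x)" using eq by blast
        then obtain y where y: "Q *v x = P1 *v y" by blast
        have "(P1 ** Q) *v x = P1 *v (P1 *v y)" by (simp add: matrix_vector_mul_assoc[symmetric] y)
        also have "\<dots> = Q *v x" by (simp add: matrix_vector_mul_assoc PP1 y)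
        finally show "(P1 ** Q) *v x = Q *v x" .
      qed
      then have "P1 ** Q = Q" using matrix_eq by blast
      then have "P1 = Q" using P1Q by simp
      then show False using QP nz2 by simp
    qed
    have ss: "subspace (range (\<lambda>x. M *v x))" for M :: "complex^'e^'e"
      by (metis linear_subspace_image matrix_vector_mul_linear subspace_UNIV)
    have sp1: "span (range (\<lambda>x. P1 *v x)) = range (\<lambda>x. P1 *v x)" using ss[of P1] by (simp only: span_eq_iff)
    have sp2: "span (range (\<lambda>x. Q *v x)) = range (\<lambda>x. Q *v x)" using ss[of Q] by (simp only: span_eq_iff)
    have "dim (range (\<lambda>x. P1 *v x)) < dim (range (\<lambda>x. Q *v x))"
      using sub neq by (intro dim_psubset) (auto simp only: sp1 sp2)
    from less.hyps[OF this P1 nz1] obtain P where P: "primitive_idempotent d A P" "P ** P1 = P"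
      by blast
    have "P ** Q = P" by (metis P(2) P1Q matrix_mul_assoc)
    then show ?thesis using P by blast
  qed
qed

context
  fixes E :: "nat \<Rightarrow> complex^'e^'e"
  assumes idem: "primitive_idempotents d A E"
begin

lemma E_prim: "r \<le> d \<Longrightarrow> primitive_idempotent d A (E r)"
  using idem by (simp add: primitive_idempotents_def)

lemma E_orth: "r \<le> d \<Longrightarrow> s \<le> d \<Longrightarrow> r \<noteq> s \<Longrightarrow> E r ** E s = 0"
proof -
  assume r: "r \<le> d" and s: "s \<le> d" and rs: "r \<noteq> s"
  have Pr: "primitive_idempotent d A (E r)" and Ps: "primitive_idempotent d A (E s)"
    using r s by (simp_all add: E_prim)
  have Ir: "idempotent_in d A (E r)" and Is: "idempotent_in d A (E s)"
    using Pr Ps by (simp_all add: primitive_idempotent_def)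
  have c: "E r ** E s = E s ** E r" using bm_comm[OF prim_bm[OF Pr] prim_bm[OF Ps]] .
  have "E r \<noteq> E s" using idem r s rs by (auto simp: primitive_idempotents_def inj_on_def)
  then show ?thesis using prim_mult[OF Pr Is] prim_mult[OF Ps Ir] c by auto
qed

lemma E_sum: "(\<Sum>r\<le>d. E r) = mat 1"
proof -
  define I' where "I' = (\<Sum>r\<le>d. E r)"
  define Q where "Q = mat 1 - I'"
  have EB: "r \<le> d \<Longrightarrow> E r \<in> bm_algebra d A" for r using E_prim prim_bm by blast
  have I'B: "I' \<in> bm_algebra d A" unfolding I'_def by (rule bm_sum) (auto intro: EB)
  have QB: "Q \<in> bm_algebra d A" unfolding Q_def using bm_one I'B by (rule bm_diff)
  have EI: "E r ** I' = E r" if r: "r \<le> d" for r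
  proof -
    have "E r ** I' = (\<Sum>r'\<le>d. E r ** E r')" unfolding I'_def by (rule sum_mult_right)
    also have "\<dots> = E r ** E r + (\<Sum>r'\<in>{..d}-{r}. E r ** E r')"
      using r by (intro sum.remove) auto
    also have "(\<Sum>r'\<in>{..d}-{r}. E r ** E r') = 0"
      using r by (intro sum.neutral) (auto intro: E_orth)
    finally show ?thesis using prim_idem[OF E_prim[OF r]] by simp
  qed
  have EQ: "E r ** Q = 0" if r: "r \<le> d" for r
    unfolding Q_def using EI[OF r] by (simp add: diff_mult_right)
  have I'Q: "I' ** Q = 0" unfolding I'_def by (simp add: sum_mult_left EQ)
  have QQ: "Q ** Q = Q"
  proof -
    have "Q ** Q = Q ** mat 1 - Q ** I'" using diff_mult_right[of Q "mat 1" I'] Q_def by metis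
    also have "Q ** I' = 0" using bm_comm[OF QB I'B] I'Q by simp
    finally show ?thesis by simp
  qed
  have "Q = 0"
  proof (rule ccontr)
    assume "Q \<noteq> 0"
    moreover have "idempotent_in d A Q" using QB QQ by (simp add: idempotent_in_def)
    ultimately obtain P where P: "primitive_idempotent d A P" "P ** Q = P" using descent by blast
    then obtain r where r: "r \<le> d" "P = E r" using idem unfolding primitive_idempotents_def by blast
    then have "P = 0" using P EQ by simp
    then show False using P prim_nz by blast
  qed
  then show ?thesis unfolding Q_def I'_def by simp
qed

end

end

lemma msc_sum_left: "(\<Sum>i\<in>S. msc (a i) X) = msc (\<Sum>i\<in>S. a i) X"
  by (simp add: vec_eq_iff sum_distrib_right)

lemma msc_zero_left[simp]: "msc 0 X = 0"
  by (simp add: vec_eq_iff)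

lemma msc_zero_right[simp]: "msc a 0 = 0"
  by (simp add: vec_eq_iff)

lemma key:
  fixes A E :: "nat \<Rightarrow> complex^'e::finite^'e" and p :: "nat \<Rightarrow> nat \<Rightarrow> complex"
  assumes scheme: "comm_assoc_scheme d A"
    and idem: "primitive_idempotents d A E"
    and eig: "\<And>k r. k \<le> d \<Longrightarrow> r \<le> d \<Longrightarrow> A k ** E r = msc (p k r) (E r)"
    and s: "s \<le> d"
    and M: "M = (\<Sum>k\<le>d. msc (c k) (A k))"
  shows "(\<exists>\<alpha>. \<alpha> \<noteq> 0 \<and> M = msc \<alpha> (E s)) \<longleftrightarrow> (\<forall>r\<le>d. (\<Sum>k\<le>d. c k * p k r) \<noteq> 0 \<longleftrightarrow> r = s)"
proof -
  have ME: "M ** E r = msc (\<Sum>k\<le>d. c k * p k r) (E r)" if r: "r \<le> d" for r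
  proof -
    have "M ** E r = (\<Sum>k\<le>d. msc (c k) (A k ** E r))"
      unfolding M by (simp add: sum_mult_left msc_mult_left)
    also have "\<dots> = (\<Sum>k\<le>d. msc (c k * p k r) (E r))"
      using r by (intro sum.cong refl) (simp add: eig msc_sum_msc)
    finally show ?thesis by (simp add: msc_sum_left)
  qed
  have nz: "r \<le> d \<Longrightarrow> E r \<noteq> 0" for r using E_prim[OF scheme idem] prim_nz[OF scheme] by blast
  have EE: "r \<le> d \<Longrightarrow> E r ** E r = E r" for r using E_prim[OF scheme idem] prim_idem[OF scheme] by blast
  show ?thesis
  proof
    assume "\<exists>\<alpha>. \<alpha> \<noteq> 0 \<and> M = msc \<alpha> (E s)"
    then obtain \<alpha> where a: "\<alpha> \<noteq> 0" "M = msc \<alpha> (E s)" by blast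
    show "\<forall>r\<le>d. (\<Sum>k\<le>d. c k * p k r) \<noteq> 0 \<longleftrightarrow> r = s"
    proof (intro allI impI)
      fix r assume r: "r \<le> d"
      show "(\<Sum>k\<le>d. c k * p k r) \<noteq> 0 \<longleftrightarrow> r = s"
      proof (cases "r = s")
        case True
        have "msc (\<Sum>k\<le>d. c k * p k r) (E r) = msc \<alpha> (E r)"
          using ME[OF r] a True EE[OF r] by (simp add: msc_mult_left)
        then have "(\<Sum>k\<le>d. c k * p k r) = \<alpha>" using msc_eq_cancel nz[OF r] by blast
        then show ?thesis using a True by simp
      next
        case False
        have "msc (\<Sum>k\<le>d. c k * p k r) (E r) = 0"
          using ME[OF r] a E_orth[OF scheme idem s r] False by (simp add: msc_mult_left)
        then have "(\<Sum>k\<le>d. c k * p k r) = 0" using msc_zero_iff nz[OF r] by blast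
        then show ?thesis using False by simp
      qed
    qed
  next
    assume H: "\<forall>r\<le>d. (\<Sum>k\<le>d. c k * p k r) \<noteq> 0 \<longleftrightarrow> r = s"
    have "M = M ** mat 1" by simp
    also have "\<dots> = (\<Sum>r\<le>d. M ** E r)" by (simp add: E_sum[OF scheme idem, symmetric] sum_mult_right)
    also have "\<dots> = (\<Sum>r\<le>d. msc (\<Sum>k\<le>d. c k * p k r) (E r))"
      by (intro sum.cong refl) (simp add: ME)
    also have "\<dots> = msc (\<Sum>k\<le>d. c k * p k s) (E s) + (\<Sum>r\<in>{..d}-{s}. msc (\<Sum>k\<le>d. c k * p k r) (E r))"
      using s by (intro sum.remove) auto
    also have "(\<Sum>r\<in>{..d}-{s}. msc (\<Sum>k\<le>d. c k * p k r) (E r)) = 0"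
      using H by (intro sum.neutral) auto
    finally have "M = msc (\<Sum>k\<le>d. c k * p k s) (E s)" by simp
    moreover have "(\<Sum>k\<le>d. c k * p k s) \<noteq> 0" using H s by blast
    ultimately show "\<exists>\<alpha>. \<alpha> \<noteq> 0 \<and> M = msc \<alpha> (E s)" by blast
  qed
qed

theorem mainTheorem2:
  fixes T :: "nat \<Rightarrow> complex^'e::finite^'c::finite"
    and A E :: "nat \<Rightarrow> complex^'e^'e"
    and p :: "nat \<Rightarrow> nat \<Rightarrow> complex"
    and t :: "nat \<Rightarrow> nat \<Rightarrow> nat \<Rightarrow> complex"
    and f :: "nat \<Rightarrow> nat \<Rightarrow> complex"
    and F :: "nat \<Rightarrow> complex^'e^'c"
    and g :: "nat \<Rightarrow> nat"
    and d l m s :: nat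
  assumes scheme: "comm_assoc_scheme d A"
    and idem: "primitive_idempotents d A E"
    and eig: "\<And>k r. k \<le> d \<Longrightarrow> r \<le> d \<Longrightarrow> A k ** E r = msc (p k r) (E r)"
    and tT: "\<And>i j. i \<in> {1..l} \<Longrightarrow> j \<in> {1..l} \<Longrightarrow>
               transpose (T i) ** T j = (\<Sum>k\<le>d. msc (t i j k) (A k))"
    and F_def: "\<And>j. j \<in> {1..m} \<Longrightarrow> F j = (\<Sum>i\<in>{1..l}. msc (f i j) (T i))"
    and s: "s \<le> d"
    and g: "\<And>j. j \<in> {1..m} \<Longrightarrow> g j \<in> {1..l}"
  shows "(\<forall>j\<in>{1..m}.
            (\<exists>\<alpha>. \<alpha> \<noteq> 0 \<and> transpose (T (g j)) ** F j = msc \<alpha> (E s)) \<and>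
            (\<forall>h\<in>{1..l}. h < g j \<longrightarrow> transpose (T h) ** F j = 0))
     \<longleftrightarrow>
         (\<forall>j\<in>{1..m}.
            (\<forall>k\<le>d. \<forall>h\<in>{1..l}. h < g j \<longrightarrow> (\<Sum>i\<in>{1..l}. f i j * t h i k) = 0) \<and>
            (\<forall>r\<le>d. (\<Sum>i\<in>{1..l}. \<Sum>k\<le>d. f i j * t (g j) i k * p k r) \<noteq> 0 \<longleftrightarrow> r = s))"
proof -
  have TF: "transpose (T h) ** F j = (\<Sum>k\<le>d. msc (\<Sum>i\<in>{1..l}. f i j * t h i k) (A k))"
    if j: "j \<in> {1..m}" and h: "h \<in> {1..l}" for j h
  proof -
    have "transpose (T h) ** F j = (\<Sum>i\<in>{1..l}. msc (f i j) (transpose (T h) ** T i))"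
      using j by (simp add: F_def sum_mult_right msc_mult_right)
    also have "\<dots> = (\<Sum>i\<in>{1..l}. \<Sum>k\<le>d. msc (f i j * t h i k) (A k))"
      using h by (intro sum.cong refl) (simp add: tT msc_sum msc_sum_msc)
    also have "\<dots> = (\<Sum>k\<le>d. \<Sum>i\<in>{1..l}. msc (f i j * t h i k) (A k))"
      by (rule sum.swap)
    also have "\<dots> = (\<Sum>k\<le>d. msc (\<Sum>i\<in>{1..l}. f i j * t h i k) (A k))"
      by (simp add: msc_sum_left)
    finally show ?thesis .
  qed
  have lam: "(\<Sum>i\<in>{1..l}. \<Sum>k\<le>d. f i j * t h i k * p k r) = (\<Sum>k\<le>d. (\<Sum>i\<in>{1..l}. f i j * t h i k) * p k r)"
    for j h r
    by (subst sum.swap) (simp add: sum_distrib_right)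
  have zero: "(\<Sum>k\<le>d. msc (c k) (A k)) = 0 \<longleftrightarrow> (\<forall>k\<le>d. c k = 0)" for c
  proof
    assume "(\<Sum>k\<le>d. msc (c k) (A k)) = 0"
    then show "\<forall>k\<le>d. c k = 0" using A_indep[OF scheme] by blast
  next
    assume "\<forall>k\<le>d. c k = 0"
    then show "(\<Sum>k\<le>d. msc (c k) (A k)) = 0" by simp
  qed
  have each: "((\<exists>\<alpha>. \<alpha> \<noteq> 0 \<and> transpose (T (g j)) ** F j = msc \<alpha> (E s)) \<and>
            (\<forall>h\<in>{1..l}. h < g j \<longrightarrow> transpose (T h) ** F j = 0))
     \<longleftrightarrow> ((\<forall>k\<le>d. \<forall>h\<in>{1..l}. h < g j \<longrightarrow> (\<Sum>i\<in>{1..l}. f i j * t h i k) = 0) \<and>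
            (\<forall>r\<le>d. (\<Sum>i\<in>{1..l}. \<Sum>k\<le>d. f i j * t (g j) i k * p k r) \<noteq> 0 \<longleftrightarrow> r = s))"
    if j: "j \<in> {1..m}" for j
  proof -
    have 1: "(\<exists>\<alpha>. \<alpha> \<noteq> 0 \<and> transpose (T (g j)) ** F j = msc \<alpha> (E s)) \<longleftrightarrow>
       (\<forall>r\<le>d. (\<Sum>i\<in>{1..l}. \<Sum>k\<le>d. f i j * t (g j) i k * p k r) \<noteq> 0 \<longleftrightarrow> r = s)"
      unfolding lam by (rule key[OF scheme idem eig s TF[OF j g[OF j]]])
    have 2: "(\<forall>h\<in>{1..l}. h < g j \<longrightarrow> transpose (T h) ** F j = 0) \<longleftrightarrow>
       (\<forall>k\<le>d. \<forall>h\<in>{1..l}. h < g j \<longrightarrow> (\<Sum>i\<in>{1..l}. f i j * t h i k) = 0)"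
    proof -
      have "\<forall>h\<in>{1..l}. (transpose (T h) ** F j = 0) \<longleftrightarrow> (\<forall>k\<le>d. (\<Sum>i\<in>{1..l}. f i j * t h i k) = 0)"
      proof
        fix h assume h: "h \<in> {1..l}"
        show "(transpose (T h) ** F j = 0) \<longleftrightarrow> (\<forall>k\<le>d. (\<Sum>i\<in>{1..l}. f i j * t h i k) = 0)"
          unfolding TF[OF j h] by (rule zero)
      qed
      then show ?thesis by auto
    qed
    show ?thesis using 1 2 by blast
  qed
  show ?thesis by (rule ball_cong[OF refl]) (rule each)
qed

end
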